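(* Let $V$ be a finite set, $f:2^V\to\mathbb{R}_+$ a nonnegative submodular function, and $t_1,\ldots,t_k\in V$ distinct terminals. Let $\mathbf{x}=(x_{i,j})_{i\in[k],j\in V}$ be a feasible solution of the relaxation $$\min \sum_{i=1}^k \hat f(\mathbf{x}_i)\quad\text{s.t.}\quad \sum_{i=1}^k x_{i,j}=1\ \ \forall j\in V,\qquad x_{i,t_i}=1\ \ \forall i\in[k],\qquad x_{i,j}\ge 0\ \ \forall i,j,$$ where $\mathbf{x}_i=(x_{i,j})_{j\in V}$. Consider the following randomized rounding: choose $\theta\in(\tfrac12,1]$ uniformly at random, let $A_i(\theta)=\{j\in V: x_{i,j}>\theta\}$ for $i\in[k]$ and $U(\theta)=V\setminus\bigcup_{i=1}^k A_i(\theta)$, choose $i'\in[k]$ uniformly at random, and assign to terminal $i$ the set $A_i(\theta)$ if $i\neq i'$ and the set $A_{i'}(\theta)\cup U(\theta)$ if $i=i'$. Then this rounding produces a feasible solution (a partition $(S_1,\ldots,S_k)$ of $V$ with $t_i\in S_i$) whose expected value $\mathbb{E}[\sum_{i=1}^k f(S_i)]$ is at most $(2-\tfrac{2}{k})\sum_{i=1}^k \hat f(\mathbf{x}_i)$.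
   Context: For $\mathbf{y}\in[0,1]^V$, the Lovász extension is $\hat f(\mathbf{y})=\mathbb{E}_{\theta}[f(\{j\in V: y_j>\theta\})]$ where $\theta$ is uniform in $[0,1]$. *)

theory Defs
  imports "HOL-Analysis.Analysis"
begin

definition submodular_on :: "'a set \<Rightarrow> ('a set \<Rightarrow> real) \<Rightarrow> bool" where
  "submodular_on V f \<longleftrightarrow>
     (\<forall>A B. A \<subseteq> V \<longrightarrow> B \<subseteq> V \<longrightarrow> f (A \<union> B) + f (A \<inter> B) \<le> f A + f B)"

definition lovasz_ext :: "'a set \<Rightarrow> ('a set \<Rightarrow> real) \<Rightarrow> ('a \<Rightarrow> real) \<Rightarrow> real" where
  "lovasz_ext V f y = integral {0..1} (\<lambda>\<theta>. f {j \<in> V. y j > \<theta>})"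

definition relax_feasible :: "'a set \<Rightarrow> nat \<Rightarrow> (nat \<Rightarrow> 'a) \<Rightarrow> (nat \<Rightarrow> 'a \<Rightarrow> real) \<Rightarrow> bool" where
  "relax_feasible V k t x \<longleftrightarrow>
     (\<forall>j\<in>V. (\<Sum>i<k. x i j) = 1) \<and> (\<forall>i<k. x i (t i) = 1) \<and> (\<forall>i<k. \<forall>j\<in>V. x i j \<ge> 0)"

definition level_set :: "'a set \<Rightarrow> (nat \<Rightarrow> 'a \<Rightarrow> real) \<Rightarrow> nat \<Rightarrow> real \<Rightarrow> 'a set" where
  "level_set V x i \<theta> = {j \<in> V. x i j > \<theta>}"

definition unassigned :: "'a set \<Rightarrow> nat \<Rightarrow> (nat \<Rightarrow> 'a \<Rightarrow> real) \<Rightarrow> real \<Rightarrow> 'a set" where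
  "unassigned V k x \<theta> = V - (\<Union>i<k. level_set V x i \<theta>)"

definition rounded_set :: "'a set \<Rightarrow> nat \<Rightarrow> (nat \<Rightarrow> 'a \<Rightarrow> real) \<Rightarrow> real \<Rightarrow> nat \<Rightarrow> nat \<Rightarrow> 'a set" where
  "rounded_set V k x \<theta> i' i =
     (if i = i' then level_set V x i' \<theta> \<union> unassigned V k x \<theta> else level_set V x i \<theta>)"

text \<open>Expected cost: theta uniform in (1/2,1] (density 2), i' uniform in {0..<k}.\<close>
definition expected_rounding_cost :: "'a set \<Rightarrow> ('a set \<Rightarrow> real) \<Rightarrow> nat \<Rightarrow> (nat \<Rightarrow> 'a \<Rightarrow> real) \<Rightarrow> real" where
  "expected_rounding_cost V f k x =
     (1 / real k) * (\<Sum>i'<k. 2 * integral {1/2<..1} (\<lambda>\<theta>. \<Sum>i<k. f (rounded_set V k x \<theta> i' i)))"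

end

theory Submission
  imports Defs
begin

definition lev :: "'a set \<Rightarrow> ('a \<Rightarrow> real) \<Rightarrow> real \<Rightarrow> 'a set" where
  "lev V v \<theta> = {j \<in> V. v j > \<theta>}"

lemma lev_set_borel:
  assumes "finite V"
  shows "{\<theta>::real. lev V v \<theta> = S} \<in> sets borel"
proof -
  have "{\<theta>::real. lev V v \<theta> = S} = (if S \<subseteq> V then {\<theta>. \<forall>j\<in>V. (\<theta> < v j) = (j \<in> S)} else {})"
    by (auto simp: lev_def)
  moreover have "{\<theta>::real. \<forall>j\<in>V. (\<theta> < v j) = (j \<in> S)} \<in> sets borel"
    using assms by measurable
  ultimately show ?thesis by simp
qed

lemma lev_integrable:
  fixes g :: "'a set \<Rightarrow> real"
  assumes "finite V"
  shows "(\<lambda>\<theta>. g (lev V v \<theta>)) integrable_on {a..b}"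
proof -
  have eq: "g (lev V v \<theta>) = (\<Sum>S\<in>Pow V. if \<theta> \<in> {\<theta>. lev V v \<theta> = S} then g S else 0)" for \<theta>
  proof -
    have "lev V v \<theta> \<in> Pow V" by (auto simp: lev_def)
    then show ?thesis
      by (simp add: sum.delta' [OF finite_Pow_iff[THEN iffD2, OF assms]] del: Pow_iff)
  qed
  have "(\<lambda>\<theta>. if \<theta> \<in> {\<theta>. lev V v \<theta> = S} then g S else 0) integrable_on {a..b}" for S
  proof -
    have "{\<theta>. lev V v \<theta> = S} \<inter> {a..b} \<in> lmeasurable"
    proof (rule bounded_set_imp_lmeasurable)
      show "bounded ({\<theta>. lev V v \<theta> = S} \<inter> {a..b})" by (simp add: bounded_Int)
      have "{\<theta>. lev V v \<theta> = S} \<in> sets lebesgue"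
        using lev_set_borel[OF assms] by (metis sets_completionI_sets sets_lborel)
      moreover have "{a..b} \<in> sets lebesgue" by simp
      ultimately show "{\<theta>. lev V v \<theta> = S} \<inter> {a..b} \<in> sets lebesgue" by (rule sets.Int)
    qed
    then show ?thesis
      using integrable_restrict_Int[of "{\<theta>. lev V v \<theta> = S}" "\<lambda>_. g S" "{a..b}"] integrable_on_const
      by blast
  qed
  then have "(\<lambda>\<theta>. \<Sum>S\<in>Pow V. if \<theta> \<in> {\<theta>. lev V v \<theta> = S} then g S else 0) integrable_on {a..b}"
    using assms by (intro integrable_sum) auto
  then show ?thesis by (simp only: eq)
qed


lemma const_Ico_integral:
  fixes c :: real
  assumes "0 \<le> (a::real)"
  shows "integral {0..<a} (\<lambda>_. c) = a * c"
proof -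
  have "integral {0..<a} (\<lambda>_. c) = integral {0..a} (\<lambda>_. c)"
    by (rule integral_spike_set; rule negligible_subset[of "{a}"]; auto)
  then show ?thesis using assms by simp
qed

lemma const_Ico_integrable:
  fixes c :: real
  shows "(\<lambda>_. c) integrable_on {0..<(a::real)}"
proof -
  have "(\<lambda>_. c) integrable_on {0..a}" using has_integral_const_real by blast
  then show ?thesis
    by (rule integrable_spike_set[OF _ negligible_subset[of "{a}"] negligible_subset[of "{a}"]]) auto
qed

lemma layer_cake:
  assumes "finite V" and "\<forall>j\<in>V. 0 \<le> v j \<and> v j \<le> c"
  shows "integral {0..c} (\<lambda>\<theta>. sum s (lev V v \<theta>)) = (\<Sum>j\<in>V. s j * v j)"
proof -
  have eq: "sum s (lev V v \<theta>) = (\<Sum>j\<in>V. if \<theta> \<in> {..<v j} then s j else 0)" for \<theta>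
    using assms(1) by (simp add: lev_def sum.inter_filter[symmetric])
  have int: "(\<lambda>\<theta>. if \<theta> \<in> {..<v j} then s j else 0) integrable_on {0..c}"
    and val: "integral {0..c} (\<lambda>\<theta>. if \<theta> \<in> {..<v j} then s j else 0) = s j * v j"
    if "j \<in> V" for j
  proof -
    have se: "{..<v j} \<inter> {0..c} = {0..<v j}" using assms(2) that by auto
    have A: "(\<lambda>\<theta>. if \<theta> \<in> {..<v j} then s j else 0) integrable_on {0..c} \<longleftrightarrow> (\<lambda>_. s j) integrable_on {0..<v j}"
      using integrable_restrict_Int[of "{..<v j}" "\<lambda>_. s j" "{0..c}"] se by simp
    have B: "integral {0..c} (\<lambda>\<theta>. if \<theta> \<in> {..<v j} then s j else 0) = integral {0..<v j} (\<lambda>_. s j)"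
      using integral_restrict_Int[of "{0..c}" "{..<v j}" "\<lambda>_. s j"] se by simp
    show "(\<lambda>\<theta>. if \<theta> \<in> {..<v j} then s j else 0) integrable_on {0..c}"
      using A const_Ico_integrable by blast
    show "integral {0..c} (\<lambda>\<theta>. if \<theta> \<in> {..<v j} then s j else 0) = s j * v j"
      using B const_Ico_integral[of "v j" "s j"] assms(2) that by simp
  qed
  show ?thesis
    unfolding eq using int val assms(1) by (simp add: integral_sum)
qed

fun gr :: "('a set \<Rightarrow> real) \<Rightarrow> 'a set \<Rightarrow> 'a list \<Rightarrow> 'a \<Rightarrow> real" where
  "gr f P [] j = 0"
| "gr f P (y # ys) j = (if j = y then f (insert y P) - f P else gr f (insert y P) ys j)"

lemma gr_tight:
  assumes "distinct xs" "set xs \<inter> P = {}" "n \<le> length xs"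
  shows "sum (gr f P xs) (set (take n xs)) = f (P \<union> set (take n xs)) - f P"
  using assms
proof (induction xs arbitrary: P n)
  case Nil
  then show ?case by simp
next
  case (Cons y ys)
  show ?case
  proof (cases n)
    case 0
    then show ?thesis by simp
  next
    case (Suc n')
    have yn: "y \<notin> set (take n' ys)" using Cons.prems(1) by (auto dest: in_set_takeD)
    have "sum (gr f P (y # ys)) (set (take n (y # ys)))
        = gr f P (y # ys) y + sum (gr f P (y # ys)) (set (take n' ys))"
      using yn Suc by simp
    also have "sum (gr f P (y # ys)) (set (take n' ys)) = sum (gr f (insert y P) ys) (set (take n' ys))"
      by (rule sum.cong) (use yn in auto)
    also have "\<dots> = f (insert y P \<union> set (take n' ys)) - f (insert y P)"
      using Cons.prems Suc by (intro Cons.IH) auto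
    finally show ?thesis using Suc by simp
  qed
qed

lemma gr_dom:
  assumes "distinct xs" "set xs \<inter> P = {}" "P \<union> set xs \<subseteq> V" "submodular_on V f" "A \<subseteq> V"
  shows "sum (gr f P xs) (A \<inter> set xs) \<le> f (A \<inter> (P \<union> set xs)) - f (A \<inter> P)"
  using assms
proof (induction xs arbitrary: P)
  case Nil
  then show ?case by simp
next
  case (Cons y ys)
  have yn: "y \<notin> set ys" "y \<notin> P" using Cons.prems by auto
  have eqs: "sum (gr f P (y # ys)) (A \<inter> set ys) = sum (gr f (insert y P) ys) (A \<inter> set ys)"
    by (rule sum.cong) (use yn in auto)
  have IH: "sum (gr f (insert y P) ys) (A \<inter> set ys)
      \<le> f (A \<inter> (insert y P \<union> set ys)) - f (A \<inter> insert y P)"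
    using Cons.prems by (intro Cons.IH) auto
  show ?case
  proof (cases "y \<in> A")
    case True
    have sm: "f (insert y P) + f (A \<inter> P) \<le> f (insert y (A \<inter> P)) + f P"
    proof -
      have "f (insert y (A \<inter> P) \<union> P) + f (insert y (A \<inter> P) \<inter> P) \<le> f (insert y (A \<inter> P)) + f P"
      proof -
        have yV: "y \<in> V" and PV: "P \<subseteq> V" using Cons.prems(3) by auto
        then have "insert y (A \<inter> P) \<subseteq> V" by auto
        then show ?thesis using PV Cons.prems(4) unfolding submodular_on_def by blast
      qed
      moreover have "insert y (A \<inter> P) \<union> P = insert y P" by auto
      moreover have "insert y (A \<inter> P) \<inter> P = A \<inter> P" using yn by auto
      ultimately show ?thesis by simp
    qed
    have "A \<inter> set (y # ys) = insert y (A \<inter> set ys)" using True by auto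
    then have "sum (gr f P (y # ys)) (A \<inter> set (y # ys)) = (f (insert y P) - f P) + sum (gr f (insert y P) ys) (A \<inter> set ys)"
      using yn eqs by simp
    also have "\<dots> \<le> (f (insert y P) - f P) + (f (A \<inter> (insert y P \<union> set ys)) - f (A \<inter> insert y P))"
      using IH by simp
    also have "\<dots> \<le> f (A \<inter> (P \<union> set (y # ys))) - f (A \<inter> P)"
    proof -
      have "A \<inter> insert y P = insert y (A \<inter> P)" using True by auto
      moreover have "A \<inter> (insert y P \<union> set ys) = A \<inter> (P \<union> set (y # ys))" by auto
      ultimately show ?thesis using sm by simp
    qed
    finally show ?thesis .
  next
    case False
    have "A \<inter> set (y # ys) = A \<inter> set ys" using False by auto
    moreover have "A \<inter> insert y P = A \<inter> P" using False by auto
    moreover have "A \<inter> (insert y P \<union> set ys) = A \<inter> (P \<union> set (y # ys))" by auto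
    ultimately show ?thesis using IH eqs by simp
  qed
qed

lemma sorted_takeWhile_set:
  fixes v :: "'a \<Rightarrow> real"
  assumes "sorted_wrt (\<lambda>a b. v b \<le> v a) xs"
  shows "set (takeWhile (\<lambda>j. \<theta> < v j) xs) = {j \<in> set xs. \<theta> < v j}"
  using assms
proof (induction xs)
  case Nil
  then show ?case by simp
next
  case (Cons y ys)
  show ?case
  proof (cases "\<theta> < v y")
    case True
    then show ?thesis using Cons by auto
  next
    case False
    have "\<forall>z\<in>set ys. v z \<le> v y" using Cons.prems by simp
    then have "\<forall>z\<in>set ys. \<not> \<theta> < v z" using False by (meson less_le_trans not_less)
    then show ?thesis using False by auto
  qed
qed

lemma greedy:
  assumes "finite V" "submodular_on V f"
  shows "\<exists>s. (\<forall>A\<subseteq>V. sum s A \<le> f A - f {}) \<and> (\<forall>\<theta>. sum s (lev V v \<theta>) = f (lev V v \<theta>) - f {})"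
proof -
  obtain xs0 where xs0: "set xs0 = V" "distinct xs0" using finite_distinct_list[OF assms(1)] by blast
  define xs where "xs = sort_key (\<lambda>j. - v j) xs0"
  have xs: "set xs = V" "distinct xs" using xs0 by (auto simp: xs_def)
  have "sorted (map (\<lambda>j. - v j) xs)" unfolding xs_def by (rule sorted_sort_key)
  then have srt: "sorted_wrt (\<lambda>a b. v b \<le> v a) xs" by (simp add: sorted_map)
  define s where "s = gr f {} xs"
  have "sum s A \<le> f A - f {}" if "A \<subseteq> V" for A
  proof -
    have "sum s (A \<inter> set xs) \<le> f (A \<inter> ({} \<union> set xs)) - f (A \<inter> {})"
      unfolding s_def using xs assms that by (intro gr_dom) auto
    moreover have "A \<inter> set xs = A" using that xs by auto
    ultimately show ?thesis by simp
  qed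
  moreover have "sum s (lev V v \<theta>) = f (lev V v \<theta>) - f {}" for \<theta>
  proof -
    define n where "n = length (takeWhile (\<lambda>j. \<theta> < v j) xs)"
    have "lev V v \<theta> = set (takeWhile (\<lambda>j. \<theta> < v j) xs)"
      using sorted_takeWhile_set[OF srt] xs by (auto simp: lev_def)
    also have "\<dots> = set (take n xs)" unfolding n_def by (metis takeWhile_eq_take)
    finally have L: "lev V v \<theta> = set (take n xs)" .
    have "n \<le> length xs" unfolding n_def by (rule length_takeWhile_le)
    then have "sum s (set (take n xs)) = f ({} \<union> set (take n xs)) - f {}"
      unfolding s_def using xs by (intro gr_tight) auto
    then show ?thesis using L by simp
  qed
  ultimately show ?thesis by blast
qed

definition Phi :: "'a set \<Rightarrow> ('a set \<Rightarrow> real) \<Rightarrow> ('a \<Rightarrow> real) \<Rightarrow> real" where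
  "Phi V f v = integral {0..1} (\<lambda>\<theta>. f (lev V v \<theta>) - f {})"

definition Psi :: "'a set \<Rightarrow> ('a set \<Rightarrow> real) \<Rightarrow> ('a \<Rightarrow> real) \<Rightarrow> real" where
  "Psi V f v = integral {0..1/2} (\<lambda>\<theta>. f (lev V v \<theta>))"

lemma Phi_low:
  assumes "finite V" "\<forall>A\<subseteq>V. sum s A \<le> f A - f {}" "\<forall>j\<in>V. 0 \<le> v j \<and> v j \<le> 1"
  shows "(\<Sum>j\<in>V. s j * v j) \<le> Phi V f v"
proof -
  have "(\<Sum>j\<in>V. s j * v j) = integral {0..1} (\<lambda>\<theta>. sum s (lev V v \<theta>))"
    using layer_cake[OF assms(1) assms(3)] by simp
  also have "\<dots> \<le> integral {0..1} (\<lambda>\<theta>. f (lev V v \<theta>) - f {})"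
  proof (rule integral_le)
    show "(\<lambda>\<theta>. sum s (lev V v \<theta>)) integrable_on {0..1}"
      using lev_integrable[OF assms(1), of "sum s"] by simp
    show "(\<lambda>\<theta>. f (lev V v \<theta>) - f {}) integrable_on {0..1}"
      using lev_integrable[OF assms(1), of "\<lambda>S. f S - f {}"] by simp
    show "sum s (lev V v \<theta>) \<le> f (lev V v \<theta>) - f {}" for \<theta>
      using assms(2) by (auto simp: lev_def)
  qed
  finally show ?thesis unfolding Phi_def .
qed

lemma Phi_eq:
  assumes "finite V" "submodular_on V f" "\<forall>j\<in>V. 0 \<le> v j \<and> v j \<le> 1"
  shows "\<exists>s. (\<forall>A\<subseteq>V. sum s A \<le> f A - f {}) \<and> Phi V f v = (\<Sum>j\<in>V. s j * v j)"
proof -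
  obtain s where s: "\<forall>A\<subseteq>V. sum s A \<le> f A - f {}" "\<forall>\<theta>. sum s (lev V v \<theta>) = f (lev V v \<theta>) - f {}"
    using greedy[OF assms(1,2)] by blast
  have "Phi V f v = integral {0..1} (\<lambda>\<theta>. sum s (lev V v \<theta>))"
    unfolding Phi_def using s(2) by simp
  also have "\<dots> = (\<Sum>j\<in>V. s j * v j)" using layer_cake[OF assms(1) assms(3)] by simp
  finally show ?thesis using s(1) by blast
qed

lemma Phi_subadd:
  assumes "finite V" "submodular_on V f" "finite R"
    and "\<forall>j\<in>V. 0 \<le> v j \<and> v j \<le> 1"
    and "\<forall>r\<in>R. \<forall>j\<in>V. 0 \<le> H r j \<and> H r j \<le> 1"
    and "\<forall>r\<in>R. 0 \<le> a r"
    and "\<forall>j\<in>V. v j = (\<Sum>r\<in>R. a r * H r j)"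
  shows "Phi V f v \<le> (\<Sum>r\<in>R. a r * Phi V f (H r))"
proof -
  obtain s where s: "\<forall>A\<subseteq>V. sum s A \<le> f A - f {}" "Phi V f v = (\<Sum>j\<in>V. s j * v j)"
    using Phi_eq[OF assms(1,2,4)] by blast
  have "Phi V f v = (\<Sum>j\<in>V. s j * (\<Sum>r\<in>R. a r * H r j))"
    using s(2) assms(7) by simp
  also have "\<dots> = (\<Sum>r\<in>R. a r * (\<Sum>j\<in>V. s j * H r j))"
    by (simp add: sum_distrib_left sum_distrib_right mult_ac sum.swap[of _ V])
  also have "\<dots> \<le> (\<Sum>r\<in>R. a r * Phi V f (H r))"
  proof (rule sum_mono)
    fix r assume r: "r \<in> R"
    show "a r * (\<Sum>j\<in>V. s j * H r j) \<le> a r * Phi V f (H r)"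
      using Phi_low[OF assms(1) s(1), of "H r"] assms(5,6) r by (intro mult_left_mono) auto
  qed
  finally show ?thesis .
qed

lemma Phi_Psi_general:
  assumes "finite V" "\<forall>S\<subseteq>V. f S \<ge> 0"
  shows "Phi V f v \<ge> Psi V f v - f {}"
proof -
  have int: "(\<lambda>\<theta>. f (lev V v \<theta>) - f {}) integrable_on {0..1}"
    using lev_integrable[OF assms(1), of "\<lambda>S. f S - f {}"] by simp
  have "Phi V f v = integral {0..1/2} (\<lambda>\<theta>. f (lev V v \<theta>) - f {}) + integral {1/2..1} (\<lambda>\<theta>. f (lev V v \<theta>) - f {})"
    unfolding Phi_def by (rule Henstock_Kurzweil_Integration.integral_combine[symmetric]) (use int in auto)
  also have "integral {0..1/2} (\<lambda>\<theta>. f (lev V v \<theta>) - f {}) = Psi V f v - f {} / 2"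
    unfolding Psi_def
    by (subst integral_diff) (auto intro: lev_integrable[OF assms(1)])
  also have "integral {1/2..1} (\<lambda>\<theta>. f (lev V v \<theta>) - f {}) \<ge> integral {1/2..1::real} (\<lambda>\<theta>. - f {})"
  proof (rule integral_le)
    show "(\<lambda>\<theta>. f (lev V v \<theta>) - f {}) integrable_on {1/2..1}"
      using lev_integrable[OF assms(1), of "\<lambda>S. f S - f {}"] by simp
    show "(\<lambda>\<theta>. - f {}) integrable_on {1/2..1::real}" using has_integral_const_real by blast
    show "- f {} \<le> f (lev V v \<theta>) - f {}" for \<theta> using assms(2) by (auto simp: lev_def)
  qed
  moreover have "integral {1/2..1::real} (\<lambda>\<theta>. - f {}) = - f {} / 2" by simp
  ultimately show ?thesis by linarith
qed

lemma Phi_Psi_half: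
  assumes "finite V" "\<forall>j\<in>V. v j \<le> 1/2"
  shows "Phi V f v = Psi V f v - f {} / 2"
proof -
  have int: "(\<lambda>\<theta>. f (lev V v \<theta>) - f {}) integrable_on {0..1}"
    using lev_integrable[OF assms(1), of "\<lambda>S. f S - f {}"] by simp
  have "Phi V f v = integral {0..1/2} (\<lambda>\<theta>. f (lev V v \<theta>) - f {}) + integral {1/2..1} (\<lambda>\<theta>. f (lev V v \<theta>) - f {})"
    unfolding Phi_def by (rule Henstock_Kurzweil_Integration.integral_combine[symmetric]) (use int in auto)
  also have "integral {0..1/2} (\<lambda>\<theta>. f (lev V v \<theta>) - f {}) = Psi V f v - f {} / 2"
    unfolding Psi_def
    by (subst integral_diff) (auto intro: lev_integrable[OF assms(1)])
  also have "integral {1/2..1} (\<lambda>\<theta>. f (lev V v \<theta>) - f {}) = integral {1/2..1::real} (\<lambda>\<theta>. 0::real)"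
  proof (rule integral_cong)
    fix \<theta> assume "\<theta> \<in> {1/2..(1::real)}"
    then have "lev V v \<theta> = {}" using assms(2) by (force simp: lev_def)
    then show "f (lev V v \<theta>) - f {} = 0" by simp
  qed
  finally show ?thesis by simp
qed

lemma Psi_lattice:
  assumes "finite V" "submodular_on V f"
  shows "Psi V f (\<lambda>j. max (v j) (w j)) + Psi V f (\<lambda>j. min (v j) (w j)) \<le> Psi V f v + Psi V f w"
proof -
  have I: "(\<lambda>\<theta>. g (lev V u \<theta>)) integrable_on {0..1/2}" for g :: "'a set \<Rightarrow> real" and u
    by (rule lev_integrable[OF assms(1)])
  have "Psi V f (\<lambda>j. max (v j) (w j)) + Psi V f (\<lambda>j. min (v j) (w j))
      = integral {0..1/2} (\<lambda>\<theta>. f (lev V (\<lambda>j. max (v j) (w j)) \<theta>) + f (lev V (\<lambda>j. min (v j) (w j)) \<theta>))"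
    unfolding Psi_def by (rule integral_add[symmetric]) (rule I)+
  also have "\<dots> \<le> integral {0..1/2} (\<lambda>\<theta>. f (lev V v \<theta>) + f (lev V w \<theta>))"
  proof (rule integral_le)
    show "(\<lambda>\<theta>. f (lev V (\<lambda>j. max (v j) (w j)) \<theta>) + f (lev V (\<lambda>j. min (v j) (w j)) \<theta>)) integrable_on {0..1/2}"
      by (intro integrable_add I)
    show "(\<lambda>\<theta>. f (lev V v \<theta>) + f (lev V w \<theta>)) integrable_on {0..1/2}"
      by (intro integrable_add I)
    fix \<theta>
    have "lev V (\<lambda>j. max (v j) (w j)) \<theta> = lev V v \<theta> \<union> lev V w \<theta>"
      "lev V (\<lambda>j. min (v j) (w j)) \<theta> = lev V v \<theta> \<inter> lev V w \<theta>"
      by (auto simp: lev_def)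
    moreover have "lev V v \<theta> \<subseteq> V" "lev V w \<theta> \<subseteq> V" by (auto simp: lev_def)
    ultimately show "f (lev V (\<lambda>j. max (v j) (w j)) \<theta>) + f (lev V (\<lambda>j. min (v j) (w j)) \<theta>)
        \<le> f (lev V v \<theta>) + f (lev V w \<theta>)"
      using assms(2) unfolding submodular_on_def by simp
  qed
  also have "\<dots> = Psi V f v + Psi V f w"
    unfolding Psi_def by (rule integral_add) (rule I)+
  finally show ?thesis .
qed

lemma Psi_nonneg:
  assumes "finite V" "\<forall>S\<subseteq>V. f S \<ge> 0"
  shows "Psi V f v \<ge> 0"
  unfolding Psi_def using assms by (intro integral_nonneg lev_integrable) (auto simp: lev_def)


lemma reflect_half:
  fixes h :: "real \<Rightarrow> real"
  assumes "(h has_integral i) {0..1/2}"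
  shows "((\<lambda>s. h (1 - s)) has_integral i) {1/2..1}"
proof -
  have "((\<lambda>x. h ((-1) *\<^sub>R x + 1)) has_integral (1 / (\<bar>-1\<bar> ^ DIM(real))) *\<^sub>R i)
          ((\<lambda>x. (1 / (-1)) *\<^sub>R x + -((1 / (-1)) *\<^sub>R 1)) ` cbox 0 (1/2))"
    by (rule has_integral_affinity) (use assms in auto)
  moreover have "(\<lambda>x::real. (1 / (-1)) *\<^sub>R x + -((1 / (-1)) *\<^sub>R 1)) ` cbox 0 (1/2) = {1/2..1}"
  proof -
    have "(\<lambda>x::real. (1 / (-1)) *\<^sub>R x + -((1 / (-1)) *\<^sub>R 1)) = (\<lambda>x. 1 - x)" by auto
    moreover have "(\<lambda>x::real. 1 - x) ` {0..1/2} = {1/2..1}"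
    proof
      show "(\<lambda>x::real. 1 - x) ` {0..1/2} \<subseteq> {1/2..1}" by auto
      show "{1/2..1} \<subseteq> (\<lambda>x::real. 1 - x) ` {0..1/2}"
      proof
        fix y :: real assume "y \<in> {1/2..1}"
        then have "1 - y \<in> {0..1/2}" "y = 1 - (1 - y)" by auto
        then show "y \<in> (\<lambda>x::real. 1 - x) ` {0..1/2}" by blast
      qed
    qed
    ultimately show ?thesis by simp
  qed
  ultimately show ?thesis by simp
qed

primrec Mx :: "(nat \<Rightarrow> 'a \<Rightarrow> real) \<Rightarrow> nat \<Rightarrow> 'a \<Rightarrow> real" where
  "Mx x 0 = x 0"
| "Mx x (Suc n) = (\<lambda>j. max (Mx x n j) (x (Suc n) j))"

lemma Mx_ge: "l \<le> n \<Longrightarrow> x l j \<le> Mx x n j"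
proof (induction n)
  case 0
  then show ?case by simp
next
  case (Suc n)
  then show ?case by (cases "l = Suc n") (auto simp: le_Suc_eq intro: max.coboundedI1)
qed

lemma Mx_att: "\<exists>l\<le>n. Mx x n j = x l j"
proof (induction n)
  case 0
  then show ?case by simp
next
  case (Suc n)
  then obtain l where "l \<le> n" "Mx x n j = x l j" by blast
  then show ?case by (cases "x l j \<le> x (Suc n) j") (auto simp: max_def intro: le_SucI)
qed

lemma Mx_sum:
  "(\<Sum>i\<le>n. x i j) = Mx x n j + (\<Sum>r\<in>{1..n}. min (Mx x (r - 1) j) (x r j))"
proof (induction n)
  case 0
  then show ?case by simp
next
  case (Suc n)
  have "{1..Suc n} = insert (Suc n) {1..n}" by auto
  then have "(\<Sum>r\<in>{1..Suc n}. min (Mx x (r - 1) j) (x r j))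
      = min (Mx x n j) (x (Suc n) j) + (\<Sum>r\<in>{1..n}. min (Mx x (r - 1) j) (x r j))" by simp
  moreover have "max (Mx x n j) (x (Suc n) j) + min (Mx x n j) (x (Suc n) j) = Mx x n j + x (Suc n) j"
    by (simp add: max_def min_def)
  ultimately show ?case using Suc by simp
qed

lemma Mx_Psi:
  assumes "finite V" "submodular_on V f"
  shows "(\<Sum>i\<le>n. Psi V f (x i)) \<ge> Psi V f (Mx x n) + (\<Sum>r\<in>{1..n}. Psi V f (\<lambda>j. min (Mx x (r - 1) j) (x r j)))"
proof (induction n)
  case 0
  then show ?case by simp
next
  case (Suc n)
  have "{1..Suc n} = insert (Suc n) {1..n}" by auto
  then have e: "(\<Sum>r\<in>{1..Suc n}. Psi V f (\<lambda>j. min (Mx x (r - 1) j) (x r j)))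
      = Psi V f (\<lambda>j. min (Mx x n j) (x (Suc n) j)) + (\<Sum>r\<in>{1..n}. Psi V f (\<lambda>j. min (Mx x (r - 1) j) (x r j)))" by simp
  have "Psi V f (\<lambda>j. max (Mx x n j) (x (Suc n) j)) + Psi V f (\<lambda>j. min (Mx x n j) (x (Suc n) j))
        \<le> Psi V f (Mx x n) + Psi V f (x (Suc n))"
    by (rule Psi_lattice[OF assms])
  then show ?case using Suc e by simp
qed


theorem theorem2:
  fixes V :: "'a set" and f :: "'a set \<Rightarrow> real" and k :: nat
    and t :: "nat \<Rightarrow> 'a" and x :: "nat \<Rightarrow> 'a \<Rightarrow> real"
  assumes "finite V"
    and "\<forall>S. S \<subseteq> V \<longrightarrow> f S \<ge> 0"
    and "submodular_on V f"
    and "k \<ge> 2"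
    and "\<forall>i<k. t i \<in> V"
    and "inj_on t {..<k}"
    and "relax_feasible V k t x"
  shows "(\<forall>\<theta> \<in> {1/2<..<1}. \<forall>i'<k.
            (\<forall>i<k. rounded_set V k x \<theta> i' i \<subseteq> V \<and> t i \<in> rounded_set V k x \<theta> i' i)
          \<and> (\<Union>i<k. rounded_set V k x \<theta> i' i) = V
          \<and> (\<forall>i<k. \<forall>l<k. i \<noteq> l \<longrightarrow> rounded_set V k x \<theta> i' i \<inter> rounded_set V k x \<theta> i' l = {}))
       \<and> expected_rounding_cost V f k x \<le> (2 - 2 / real k) * (\<Sum>i<k. lovasz_ext V f (x i))"
proof -
  note fin = assms(1)
  have fnn: "\<forall>S\<subseteq>V. f S \<ge> 0" using assms(2) by blast
  note sub = assms(3)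
  have k2: "k \<ge> 2" by fact
  have sum1: "\<And>j. j \<in> V \<Longrightarrow> (\<Sum>i<k. x i j) = 1"
    and tm: "\<And>i. i < k \<Longrightarrow> x i (t i) = 1"
    and nn: "\<And>i j. i < k \<Longrightarrow> j \<in> V \<Longrightarrow> x i j \<ge> 0"
    using assms(7) unfolding relax_feasible_def by auto
  have pair: "x i j + x l j \<le> 1" if "i < k" "l < k" "i \<noteq> l" "j \<in> V" for i l j
  proof -
    have "(\<Sum>i\<in>{i,l}. x i j) \<le> (\<Sum>i<k. x i j)"
      by (rule sum_mono2) (use that nn in auto)
    then show ?thesis using that sum1 by simp
  qed
  have le1: "x i j \<le> 1" if "i < k" "j \<in> V" for i j
  proof -
    have "(\<Sum>i\<in>{i}. x i j) \<le> (\<Sum>i<k. x i j)"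
      by (rule sum_mono2) (use that nn in auto)
    then show ?thesis using that sum1 by simp
  qed
  have f0: "f {} \<ge> 0" using fnn by auto
  have lvl: "level_set V x i \<theta> = lev V (x i) \<theta>" for i \<theta>
    by (simp add: level_set_def lev_def)

  have part1: "(\<forall>i<k. rounded_set V k x \<theta> i' i \<subseteq> V \<and> t i \<in> rounded_set V k x \<theta> i' i)
          \<and> (\<Union>i<k. rounded_set V k x \<theta> i' i) = V
          \<and> (\<forall>i<k. \<forall>l<k. i \<noteq> l \<longrightarrow> rounded_set V k x \<theta> i' i \<inter> rounded_set V k x \<theta> i' l = {})"
    if th: "\<theta> \<in> {1/2<..<1}" and i': "i' < k" for \<theta> i'
  proof -
    have disj: "level_set V x i \<theta> \<inter> level_set V x l \<theta> = {}" if "i < k" "l < k" "i \<noteq> l" for i l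
    proof -
      have False if "j \<in> V" "x i j > \<theta>" "x l j > \<theta>" for j
        using pair[OF \<open>i < k\<close> \<open>l < k\<close> \<open>i \<noteq> l\<close> that(1)] that th by auto
      then show ?thesis by (auto simp: level_set_def)
    qed
    have sub1: "level_set V x i \<theta> \<subseteq> rounded_set V k x \<theta> i' i" for i
      by (auto simp: rounded_set_def)
    have subV: "rounded_set V k x \<theta> i' i \<subseteq> V" for i
      by (auto simp: rounded_set_def level_set_def unassigned_def)
    have tin: "t i \<in> level_set V x i \<theta>" if "i < k" for i
      using assms(5) that tm[OF that] th by (auto simp: level_set_def)
    have A: "\<forall>i<k. rounded_set V k x \<theta> i' i \<subseteq> V \<and> t i \<in> rounded_set V k x \<theta> i' i"
      using sub1 subV tin by blast
    have B: "(\<Union>i<k. rounded_set V k x \<theta> i' i) = V"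
    proof
      show "(\<Union>i<k. rounded_set V k x \<theta> i' i) \<subseteq> V" using subV by blast
      show "V \<subseteq> (\<Union>i<k. rounded_set V k x \<theta> i' i)"
      proof
        fix j assume j: "j \<in> V"
        show "j \<in> (\<Union>i<k. rounded_set V k x \<theta> i' i)"
        proof (cases "\<exists>l<k. j \<in> level_set V x l \<theta>")
          case True
          then show ?thesis using sub1 by blast
        next
          case False
          then have "j \<in> unassigned V k x \<theta>" using j by (auto simp: unassigned_def)
          then have "j \<in> rounded_set V k x \<theta> i' i'" by (auto simp: rounded_set_def)
          then show ?thesis using i' by blast
        qed
      qed
    qed
    have C: "\<forall>i<k. \<forall>l<k. i \<noteq> l \<longrightarrow> rounded_set V k x \<theta> i' i \<inter> rounded_set V k x \<theta> i' l = {}"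
    proof (intro allI impI)
      fix i l assume il: "i < k" "l < k" "i \<noteq> l"
      have ua: "unassigned V k x \<theta> \<inter> level_set V x l \<theta> = {}" if "l < k" for l
        using that by (auto simp: unassigned_def)
      show "rounded_set V k x \<theta> i' i \<inter> rounded_set V k x \<theta> i' l = {}"
        using disj[OF il] disj[OF il(2,1) il(3)[symmetric]] ua[OF il(1)] ua[OF il(2)] il(3)
        by (auto simp: rounded_set_def)
    qed
    show ?thesis using A B C by blast
  qed

  define m where "m = Mx x (k - 1)"
  have m_ge: "x l j \<le> m j" if "l < k" for l j
  proof -
    have "l \<le> k - 1" using that by simp
    then show ?thesis unfolding m_def by (rule Mx_ge)
  qed
  have m_att: "\<exists>l<k. m j = x l j" for j
  proof -
    obtain l where l: "l \<le> k - 1" "Mx x (k - 1) j = x l j" using Mx_att[of "k - 1" x j] by blast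
    have "l < k" using l(1) k2 by simp
    then show ?thesis using l(2) unfolding m_def by blast
  qed
  have m_rng: "0 \<le> m j \<and> m j \<le> 1" if "j \<in> V" for j
  proof -
    obtain l where l: "l < k" "m j = x l j" using m_att by blast
    have "0 \<le> x l j" by (rule nn[OF l(1) that])
    moreover have "x l j \<le> 1" by (rule le1[OF l(1) that])
    ultimately show ?thesis using l(2) by simp
  qed
  define Ub where "Ub = (\<lambda>j. min (1/2) (1 - m j))"
  define W where "W = (\<lambda>i j. max (Ub j) (x i j))"
  define G where "G = (\<lambda>i j. min (Ub j) (x i j))"
  define L where "L = (\<lambda>r j. min (Mx x (r - 1) j) (x r j))"
  define C where "C = (\<lambda>i. integral {1/2..1} (\<lambda>s. f (level_set V x i s)))"
  define P where "P = (\<lambda>v. Psi V f v)"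
  have Ub_rng: "0 \<le> Ub j \<and> Ub j \<le> 1/2" if "j \<in> V" for j
    using m_rng[OF that] unfolding Ub_def by linarith
  have G_rng: "0 \<le> G i j \<and> G i j \<le> 1/2" if "i < k" "j \<in> V" for i j
    using Ub_rng[OF that(2)] nn[OF that] by (auto simp: G_def)
  have sumG: "Ub j = (\<Sum>i<k. 1/2 * G i j)" if j: "j \<in> V" for j
  proof (cases "m j \<le> 1/2")
    case True
    then have "Ub j = 1/2" by (auto simp: Ub_def)
    moreover have Gx: "G i j = x i j" if "i < k" for i
      using m_ge[OF that, of j] True \<open>Ub j = 1/2\<close> by (auto simp: G_def)
    have "(\<Sum>i<k. 1/2 * G i j) = 1/2 * (\<Sum>i<k. G i j)" by (rule sum_distrib_left[symmetric])
    also have "(\<Sum>i<k. G i j) = (\<Sum>i<k. x i j)" by (rule sum.cong) (use Gx in auto)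
    finally show ?thesis using sum1[OF j] \<open>Ub j = 1/2\<close> by simp
  next
    case False
    obtain l where l: "l < k" "m j = x l j" using m_att by blast
    have U: "Ub j = 1 - x l j" using False l by (auto simp: Ub_def)
    have Gl: "G l j = 1 - x l j" using False l U by (auto simp: G_def)
    have Gi: "G i j = x i j" if "i < k" "i \<noteq> l" for i
      using pair[OF that(1) l(1) that(2) j] U by (auto simp: G_def)
    have "(\<Sum>i<k. G i j) = G l j + (\<Sum>i\<in>{..<k} - {l}. G i j)"
      using l(1) by (simp add: sum.remove)
    also have "(\<Sum>i\<in>{..<k} - {l}. G i j) = (\<Sum>i\<in>{..<k} - {l}. x i j)"
      using Gi by (intro sum.cong) auto
    also have "\<dots> = 1 - x l j"
      using sum1[OF j] l(1) by (simp add: sum_diff1)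
    finally have "(\<Sum>i<k. G i j) = 2 * Ub j" using Gl U by simp
    moreover have "(\<Sum>i<k. 1/2 * G i j) = 1/2 * (\<Sum>i<k. G i j)" by (rule sum_distrib_left[symmetric])
    ultimately show ?thesis by simp
  qed
  have C3: "2 * P Ub \<le> (\<Sum>i<k. P (G i))"
  proof -
    have a1: "\<forall>j\<in>V. 0 \<le> Ub j \<and> Ub j \<le> 1"
    proof
      fix j assume "j \<in> V" then show "0 \<le> Ub j \<and> Ub j \<le> 1" using Ub_rng[of j] by linarith
    qed
    have a2: "\<forall>r\<in>{..<k}. \<forall>j\<in>V. 0 \<le> G r j \<and> G r j \<le> 1"
    proof (intro ballI)
      fix r j assume "r \<in> {..<k}" "j \<in> V"
      then show "0 \<le> G r j \<and> G r j \<le> 1" using G_rng[of r j] by simp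
    qed
    have a3: "\<forall>r\<in>{..<k}. 0 \<le> (\<lambda>_. 1/2::real) r" by simp
    have a4: "\<forall>j\<in>V. Ub j = (\<Sum>r\<in>{..<k}. (\<lambda>_. 1/2) r * G r j)" using sumG by simp
    have "Phi V f Ub \<le> (\<Sum>i\<in>{..<k}. (\<lambda>_. 1/2) i * Phi V f (G i))"
      by (rule Phi_subadd[OF fin sub _ a1 a2 a3 a4]) simp
    moreover have "Phi V f Ub = P Ub - f {} / 2"
      unfolding P_def by (rule Phi_Psi_half[OF fin]) (use Ub_rng in auto)
    moreover have "(\<Sum>i\<in>{..<k}. (\<lambda>_. 1/2) i * Phi V f (G i)) = (\<Sum>i<k. 1/2 * (P (G i) - f {} / 2))"
    proof (rule sum.cong)
      fix i assume i: "i \<in> {..<k}"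
      have "\<forall>j\<in>V. G i j \<le> 1/2" using G_rng i by simp
      then show "(\<lambda>_. 1/2) i * Phi V f (G i) = 1/2 * (P (G i) - f {} / 2)"
        unfolding P_def using Phi_Psi_half[OF fin] by simp
    qed simp
    ultimately have "P Ub - f {} / 2 \<le> (\<Sum>i<k. 1/2 * (P (G i) - f {} / 2))" by linarith
    also have "\<dots> = 1/2 * (\<Sum>i<k. P (G i)) - real k * f {} / 4"
    proof -
      have "(\<Sum>i<k. 1/2 * (P (G i) - f {} / 2)) = (\<Sum>i<k. 1/2 * P (G i) - f {} / 4)"
        by (rule sum.cong) auto
      also have "\<dots> = (\<Sum>i<k. 1/2 * P (G i)) - (\<Sum>i<k. f {} / 4)"
        by (rule sum_subtractf)
      also have "(\<Sum>i<k. 1/2 * P (G i)) = 1/2 * (\<Sum>i<k. P (G i))"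
        by (rule sum_distrib_left[symmetric])
      also have "(\<Sum>i<k. f {} / 4) = real k * f {} / 4" by simp
      finally show ?thesis .
    qed
    finally have "2 * P Ub \<le> (\<Sum>i<k. P (G i)) + f {} - real k * f {} / 2" by simp
    moreover have "real k * f {} / 2 \<ge> f {}"
    proof -
      have "real k \<ge> 2" using k2 by simp
      then have "real k * f {} \<ge> 2 * f {}" using f0 by (intro mult_right_mono) auto
      then show ?thesis by simp
    qed
    ultimately show ?thesis by linarith
  qed
  have C4: "P (W i) + P (G i) \<le> P Ub + P (x i)" for i
    unfolding P_def W_def G_def using Psi_lattice[OF fin sub, of Ub "x i"] by simp
  have C2: "P Ub \<le> (\<Sum>i<k. P (x i))" if k3: "k \<ge> 3"
  proof -
    define u where "u = (\<lambda>j. 1 - m j)"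
    have u_rng: "0 \<le> u j \<and> u j \<le> 1" if "j \<in> V" for j using m_rng[OF that] by (auto simp: u_def)
    have L_rng: "0 \<le> L r j \<and> L r j \<le> 1/2" if "r \<in> {1..k-1}" "j \<in> V" for r j
    proof -
      obtain l where l: "l \<le> r - 1" "Mx x (r - 1) j = x l j" using Mx_att[of "r - 1" x j] by blast
      have lk: "l < k" and rk: "r < k" and lr: "r \<noteq> l" using l that by auto
      have p: "x r j + x l j \<le> 1" by (rule pair[OF rk lk lr that(2)])
      have n1: "0 \<le> x l j" by (rule nn[OF lk that(2)])
      have n2: "0 \<le> x r j" by (rule nn[OF rk that(2)])
      have "L r j = min (x l j) (x r j)" unfolding L_def using l(2) by simp
      then show ?thesis using p n1 n2 by (simp add: min_def)
    qed
    have sumL: "u j = (\<Sum>r\<in>{1..k-1}. 1 * L r j)" if "j \<in> V" for j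
    proof -
      have "{..k-1} = {..<k}" using k2 by auto
      then have "(\<Sum>i\<le>k-1. x i j) = 1" using sum1[OF that] by simp
      moreover have "(\<Sum>i\<le>k-1. x i j) = Mx x (k - 1) j + (\<Sum>r\<in>{1..k-1}. L r j)"
        unfolding L_def by (rule Mx_sum)
      ultimately show ?thesis unfolding u_def m_def by simp
    qed
    have PU: "P Ub = P u"
      unfolding P_def Psi_def
    proof (rule integral_spike[of "{1/2}"])
      show "negligible {1/2::real}" by simp
      fix \<theta> :: real assume "\<theta> \<in> {0..1/2} - {1/2}"
      then have "\<theta> < 1/2" by auto
      then have "lev V u \<theta> = lev V Ub \<theta>" by (auto simp: lev_def Ub_def u_def)
      then show "f (lev V u \<theta>) = f (lev V Ub \<theta>)" by simp
    qed
    have a1: "\<forall>j\<in>V. 0 \<le> u j \<and> u j \<le> 1" using u_rng by blast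
    have a2: "\<forall>r\<in>{1..k-1}. \<forall>j\<in>V. 0 \<le> L r j \<and> L r j \<le> 1"
    proof (intro ballI)
      fix r j assume "r \<in> {1..k-1}" "j \<in> V"
      then show "0 \<le> L r j \<and> L r j \<le> 1" using L_rng[of r j] by simp
    qed
    have a3: "\<forall>r\<in>{1..k-1}. 0 \<le> (\<lambda>_. 1::real) r" by simp
    have a4: "\<forall>j\<in>V. u j = (\<Sum>r\<in>{1..k-1}. (\<lambda>_. 1) r * L r j)" using sumL by simp
    have "Phi V f u \<le> (\<Sum>r\<in>{1..k-1}. (\<lambda>_. 1) r * Phi V f (L r))"
      by (rule Phi_subadd[OF fin sub _ a1 a2 a3 a4]) simp
    moreover have "Phi V f u \<ge> P u - f {}"
      unfolding P_def by (rule Phi_Psi_general[OF fin fnn])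
    moreover have "(\<Sum>r\<in>{1..k-1}. (\<lambda>_. 1) r * Phi V f (L r)) = (\<Sum>r\<in>{1..k-1}. P (L r) - f {} / 2)"
    proof (rule sum.cong)
      fix r assume r: "r \<in> {1..k-1}"
      have "\<forall>j\<in>V. L r j \<le> 1/2" using L_rng[OF r] by blast
      then show "(\<lambda>_. 1) r * Phi V f (L r) = P (L r) - f {} / 2"
        unfolding P_def using Phi_Psi_half[OF fin] by simp
    qed simp
    ultimately have "P u - f {} \<le> (\<Sum>r\<in>{1..k-1}. P (L r) - f {} / 2)" by linarith
    also have "\<dots> = (\<Sum>r\<in>{1..k-1}. P (L r)) - real (k - 1) * f {} / 2"
      by (simp add: sum_subtractf)
    finally have "P u \<le> (\<Sum>r\<in>{1..k-1}. P (L r)) + f {} - real (k - 1) * f {} / 2" by simp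
    moreover have "real (k - 1) * f {} / 2 \<ge> f {}"
    proof -
      have "real (k - 1) \<ge> 2" using k3 by simp
      then have "real (k - 1) * f {} \<ge> 2 * f {}" using f0 by (intro mult_right_mono) auto
      then show ?thesis by simp
    qed
    ultimately have "P u \<le> (\<Sum>r\<in>{1..k-1}. P (L r))" by linarith
    moreover have "(\<Sum>i\<le>k-1. P (x i)) \<ge> P m + (\<Sum>r\<in>{1..k-1}. P (L r))"
      unfolding P_def m_def L_def by (rule Mx_Psi[OF fin sub])
    moreover have "P m \<ge> 0" unfolding P_def by (rule Psi_nonneg[OF fin fnn])
    moreover have "{..k-1} = {..<k}" using k2 by auto
    ultimately have "P u \<le> (\<Sum>i<k. P (x i))" by (metis (no_types, lifting) add_increasing order_trans)
    then show ?thesis using PU by simp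
  qed
  have keyW: "(\<Sum>i<k. P (W i)) \<le> (real k - 1) * (\<Sum>i<k. P (x i))"
  proof -
    have "(\<Sum>i<k. P (W i)) \<le> (\<Sum>i<k. P Ub + P (x i) - P (G i))"
    proof (rule sum_mono)
      fix i show "P (W i) \<le> P Ub + P (x i) - P (G i)" using C4[of i] by linarith
    qed
    also have "\<dots> = real k * P Ub + (\<Sum>i<k. P (x i)) - (\<Sum>i<k. P (G i))"
      by (simp add: sum.distrib sum_subtractf)
    also have "\<dots> \<le> (real k - 2) * P Ub + (\<Sum>i<k. P (x i))"
      using C3 by (simp add: algebra_simps)
    also have "(real k - 2) * P Ub \<le> (real k - 2) * (\<Sum>i<k. P (x i))"
    proof (cases "k = 2")
      case True
      then show ?thesis by simp
    next
      case False
      then have "k \<ge> 3" using k2 by simp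
      then show ?thesis using C2 by (intro mult_left_mono) auto
    qed
    finally show ?thesis by (simp add: algebra_simps)
  qed

  have levint: "((\<lambda>s. f (level_set V x i s)) has_integral C i) {1/2..1}" for i
    unfolding C_def lvl using lev_integrable[OF fin] by blast
  have Wint: "((\<lambda>s. f (rounded_set V k x s i' i')) has_integral P (W i')) {1/2..1}" if i': "i' < k" for i'
  proof -
    have h: "((\<lambda>\<theta>. f (lev V (W i') \<theta>)) has_integral P (W i')) {0..1/2}"
      unfolding P_def Psi_def using lev_integrable[OF fin] by blast
    have r: "((\<lambda>s. f (lev V (W i') (1 - s))) has_integral P (W i')) {1/2..1}"
      using reflect_half[OF h] by simp
    define F where "F = (\<lambda>(l, j). x l j) ` ({..<k} \<times> V) \<union> {1/2, 1}"
    have finF: "finite F" unfolding F_def using fin by auto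
    show ?thesis
    proof (rule has_integral_spike_finite[OF finF _ r])
      fix s assume s: "s \<in> {1/2..1} - F"
      then have s1: "1/2 < s" "s < 1" and sx: "\<And>l j. l < k \<Longrightarrow> j \<in> V \<Longrightarrow> x l j \<noteq> s"
        unfolding F_def by auto
      have "rounded_set V k x s i' i' = lev V (W i') (1 - s)"
      proof (rule set_eqI)
        fix j
        show "j \<in> rounded_set V k x s i' i' \<longleftrightarrow> j \<in> lev V (W i') (1 - s)"
        proof (cases "j \<in> V")
          case False
          then show ?thesis by (auto simp: rounded_set_def level_set_def unassigned_def lev_def)
        next
          case j: True
          obtain l0 where l0: "l0 < k" "m j = x l0 j" using m_att by blast
          have ms: "m j \<noteq> s" using sx[OF l0(1) j] l0 by simp
          have allle: "(\<forall>l<k. \<not> x l j > s) \<longleftrightarrow> m j < s"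
          proof
            assume "\<forall>l<k. \<not> x l j > s"
            then have "m j \<le> s" using l0 by auto
            then show "m j < s" using ms by linarith
          next
            assume "m j < s"
            then show "\<forall>l<k. \<not> x l j > s" using m_ge by (meson not_less order.trans less_imp_le)
          qed
          have ub: "Ub j > 1 - s \<longleftrightarrow> m j < s" using s1 by (auto simp: Ub_def)
          have L: "j \<in> rounded_set V k x s i' i' \<longleftrightarrow> x i' j > s \<or> m j < s"
            using j allle by (auto simp: rounded_set_def level_set_def unassigned_def)
          have R: "j \<in> lev V (W i') (1 - s) \<longleftrightarrow> m j < s \<or> x i' j > 1 - s"
            using j ub by (auto simp: lev_def W_def)
          have "x i' j > s \<longleftrightarrow> x i' j > 1 - s" if "\<not> m j < s"
          proof
            assume "x i' j > s" then show "x i' j > 1 - s" using s1 by linarith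
          next
            assume a: "x i' j > 1 - s"
            show "x i' j > s"
            proof (rule ccontr)
              assume "\<not> x i' j > s"
              then have "x i' j < m j" using that ms by linarith
              then have "i' \<noteq> l0" using l0 by auto
              then have "x i' j + x l0 j \<le> 1" using pair[OF i' l0(1) _ j] by blast
              then show False using a l0 that ms by linarith
            qed
          qed
          then show ?thesis using L R by blast
        qed
      qed
      then show "f (rounded_set V k x s i' i') = f (lev V (W i') (1 - s))" by simp
    qed
  qed
  have cost_i: "integral {1/2<..1} (\<lambda>\<theta>. \<Sum>i<k. f (rounded_set V k x \<theta> i' i))
      = P (W i') + (\<Sum>i\<in>{..<k} - {i'}. C i)" if i': "i' < k" for i'
  proof -
    have eq: "(\<Sum>i<k. f (rounded_set V k x \<theta> i' i))
        = f (rounded_set V k x \<theta> i' i') + (\<Sum>i\<in>{..<k} - {i'}. f (level_set V x i \<theta>))" for \<theta>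
    proof -
      have "(\<Sum>i<k. f (rounded_set V k x \<theta> i' i))
          = f (rounded_set V k x \<theta> i' i') + (\<Sum>i\<in>{..<k} - {i'}. f (rounded_set V k x \<theta> i' i))"
        using i' by (simp add: sum.remove)
      also have "(\<Sum>i\<in>{..<k} - {i'}. f (rounded_set V k x \<theta> i' i)) = (\<Sum>i\<in>{..<k} - {i'}. f (level_set V x i \<theta>))"
        by (intro sum.cong) (auto simp: rounded_set_def)
      finally show ?thesis .
    qed
    have "((\<lambda>\<theta>. f (rounded_set V k x \<theta> i' i') + (\<Sum>i\<in>{..<k} - {i'}. f (level_set V x i \<theta>)))
        has_integral (P (W i') + (\<Sum>i\<in>{..<k} - {i'}. C i))) {1/2..1}"
      by (intro has_integral_add Wint[OF i'] has_integral_sum levint) auto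
    then have "integral {1/2..1} (\<lambda>\<theta>. \<Sum>i<k. f (rounded_set V k x \<theta> i' i)) = P (W i') + (\<Sum>i\<in>{..<k} - {i'}. C i)"
      unfolding eq by (rule integral_unique)
    moreover have "integral {1/2<..1} (\<lambda>\<theta>. \<Sum>i<k. f (rounded_set V k x \<theta> i' i))
        = integral {1/2..1} (\<lambda>\<theta>. \<Sum>i<k. f (rounded_set V k x \<theta> i' i))"
      by (rule integral_spike_set; rule negligible_subset[of "{1/2}"]; auto)
    ultimately show ?thesis by simp
  qed
  have lov: "lovasz_ext V f (x i) = P (x i) + C i" for i
  proof -
    have int: "(\<lambda>\<theta>. f (lev V (x i) \<theta>)) integrable_on {0..1}" by (rule lev_integrable[OF fin])
    have "lovasz_ext V f (x i) = integral {0..1} (\<lambda>\<theta>. f (lev V (x i) \<theta>))"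
      by (simp add: lovasz_ext_def lev_def)
    also have "\<dots> = integral {0..1/2} (\<lambda>\<theta>. f (lev V (x i) \<theta>)) + integral {1/2..1} (\<lambda>\<theta>. f (lev V (x i) \<theta>))"
      by (rule Henstock_Kurzweil_Integration.integral_combine[symmetric]) (use int in auto)
    finally show ?thesis unfolding P_def Psi_def C_def lvl .
  qed
  have costeq: "expected_rounding_cost V f k x = (2 / real k) * ((\<Sum>i'<k. P (W i')) + (real k - 1) * (\<Sum>i<k. C i))"
  proof -
    have "expected_rounding_cost V f k x = (1 / real k) * (\<Sum>i'<k. 2 * (P (W i') + (\<Sum>i\<in>{..<k} - {i'}. C i)))"
      unfolding expected_rounding_cost_def using cost_i by simp
    also have "(\<Sum>i'<k. 2 * (P (W i') + (\<Sum>i\<in>{..<k} - {i'}. C i)))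
        = 2 * ((\<Sum>i'<k. P (W i')) + (\<Sum>i'<k. (\<Sum>i<k. C i) - C i'))"
    proof -
      have "(\<Sum>i'<k. 2 * (P (W i') + (\<Sum>i\<in>{..<k} - {i'}. C i)))
          = (\<Sum>i'<k. 2 * (P (W i') + ((\<Sum>i<k. C i) - C i')))"
        by (rule sum.cong) (simp_all add: sum_diff1)
      also have "\<dots> = 2 * (\<Sum>i'<k. P (W i') + ((\<Sum>i<k. C i) - C i'))"
        by (rule sum_distrib_left[symmetric])
      also have "(\<Sum>i'<k. P (W i') + ((\<Sum>i<k. C i) - C i')) = (\<Sum>i'<k. P (W i')) + (\<Sum>i'<k. (\<Sum>i<k. C i) - C i')"
        by (rule sum.distrib)
      finally show ?thesis .
    qed
    also have "(\<Sum>i'<k. (\<Sum>i<k. C i) - C i') = (real k - 1) * (\<Sum>i<k. C i)"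
      by (simp add: sum_subtractf algebra_simps)
    finally show ?thesis by simp
  qed
  have part2: "expected_rounding_cost V f k x \<le> (2 - 2 / real k) * (\<Sum>i<k. lovasz_ext V f (x i))"
  proof -
    have kpos: "real k > 0" using k2 by simp
    have "(\<Sum>i<k. lovasz_ext V f (x i)) = (\<Sum>i<k. P (x i)) + (\<Sum>i<k. C i)"
      by (simp add: lov sum.distrib)
    moreover have "2 - 2 / real k = (2 / real k) * (real k - 1)" using kpos by (simp add: field_simps)
    ultimately have R: "(2 - 2 / real k) * (\<Sum>i<k. lovasz_ext V f (x i))
        = (2 / real k) * ((real k - 1) * (\<Sum>i<k. P (x i)) + (real k - 1) * (\<Sum>i<k. C i))"
      by (simp add: algebra_simps)
    show ?thesis unfolding costeq R using keyW kpos
      by (intro mult_left_mono) auto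
  qed
  show ?thesis using part1 part2 by blast
qed

end
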